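(* Let $\Lambda=D+A_n+A_p$ be an $n\times n$ SDD matrix, where $D$ is the diagonal of $\Lambda$, $A_p$ contains all positive off-diagonal entries of $\Lambda$ and $A_n$ contains all negative off-diagonal entries. Let $$S=\begin{pmatrix}D+A_n&-A_p\\-A_p&D+A_n\end{pmatrix},$$ and let $\tilde C$ be a matrix with $\tilde C\tilde C^\top=S^{-1}$. Then the matrix $C=\frac1{\sqrt2}\begin{pmatrix}I_n&-I_n\end{pmatrix}\tilde C$ satisfies $CC^\top=\Lambda^{-1}$.
   Context: SDD: symmetric matrix with $m_{ii}>\sum_{j\ne i}|m_{ij}|$ for all $i$. $I_n$ is the $n\times n$ identity. *)

theory Defs
  imports "HOL-Analysis.Analysis"
begin

definition SDD :: "real^'n^'n \<Rightarrow> bool" where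
  "SDD M \<longleftrightarrow> transpose M = M \<and>
     (\<forall>i. M $ i $ i > (\<Sum>j\<in>UNIV - {i}. \<bar>M $ i $ j\<bar>))"

definition diag_part :: "real^'n^'n \<Rightarrow> real^'n^'n" where
  "diag_part M = (\<chi> i j. if i = j then M $ i $ j else 0)"

definition pos_offdiag :: "real^'n^'n \<Rightarrow> real^'n^'n" where
  "pos_offdiag M = (\<chi> i j. if i \<noteq> j \<and> M $ i $ j > 0 then M $ i $ j else 0)"

definition neg_offdiag :: "real^'n^'n \<Rightarrow> real^'n^'n" where
  "neg_offdiag M = (\<chi> i j. if i \<noteq> j \<and> M $ i $ j < 0 then M $ i $ j else 0)"

definition block_mat :: "real^'n^'n \<Rightarrow> real^'n^'n \<Rightarrow> real^'n^'n \<Rightarrow> real^'n^'n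
    \<Rightarrow> real^('n + 'n)^('n + 'n)" where
  "block_mat A B C D = (\<chi> r c. case (r, c) of
      (Inl i, Inl j) \<Rightarrow> A $ i $ j | (Inl i, Inr j) \<Rightarrow> B $ i $ j
    | (Inr i, Inl j) \<Rightarrow> C $ i $ j | (Inr i, Inr j) \<Rightarrow> D $ i $ j)"

definition I_minus_I :: "real^('n + 'n)^'n" where
  "I_minus_I = (\<chi> i r. case r of Inl j \<Rightarrow> (mat 1 :: real^'n^'n) $ i $ j
                              | Inr j \<Rightarrow> - (mat 1 :: real^'n^'n) $ i $ j)"

definition S_mat :: "real^'n^'n \<Rightarrow> real^('n + 'n)^('n + 'n)" where
  "S_mat L = block_mat (diag_part L + neg_offdiag L) (- pos_offdiag L)
                       (- pos_offdiag L) (diag_part L + neg_offdiag L)"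

end

theory Submission
  imports Defs
begin

lemma sum_UNIV_plus:
  fixes f :: "('a::finite + 'b::finite) \<Rightarrow> 'c::comm_monoid_add"
  shows "sum f UNIV = (\<Sum>i\<in>UNIV. f (Inl i)) + (\<Sum>j\<in>UNIV. f (Inr j))"
proof -
  have U: "(UNIV :: ('a+'b) set) = range Inl \<union> range Inr"
    by (metis UNIV_Plus_UNIV Plus_def)
  have "sum f UNIV = sum f (range Inl) + sum f (range Inr)"
    unfolding U by (rule sum.union_disjoint) auto
  also have "sum f (range Inl) = (\<Sum>i\<in>UNIV. f (Inl i))"
    by (subst sum.reindex) (auto simp: inj_on_def)
  also have "sum f (range Inr) = (\<Sum>j\<in>UNIV. f (Inr j))"
    by (subst sum.reindex) (auto simp: inj_on_def)
  finally show ?thesis .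
qed

lemma sum_minus_single: "sum g (UNIV - {r}) = sum (\<lambda>c. if c = r then 0 else g c) (UNIV::'a::finite set)"
  by (simp add: sum.If_cases Diff_eq Int_commute)

lemma S_dd:
  fixes L :: "real^'n^'n"
  assumes sdd: "\<And>i. L $ i $ i > (\<Sum>j\<in>UNIV - {i}. \<bar>L $ i $ j\<bar>)"
  shows "\<bar>S_mat L $ r $ r\<bar> > (\<Sum>c\<in>UNIV - {r}. \<bar>S_mat L $ r $ c\<bar>)"
proof -
  have e: "\<And>i k. (if k = i then 0 else \<bar>(diag_part L + neg_offdiag L) $ i $ k\<bar>) + \<bar>pos_offdiag L $ i $ k\<bar>
      = (if k = i then 0 else \<bar>L $ i $ k\<bar>)"
    by (auto simp: diag_part_def neg_offdiag_def pos_offdiag_def)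
  have e2: "\<And>i k. \<bar>pos_offdiag L $ i $ k\<bar> + (if k = i then 0 else \<bar>(diag_part L + neg_offdiag L) $ i $ k\<bar>)
      = (if k = i then 0 else \<bar>L $ i $ k\<bar>)"
    by (auto simp: diag_part_def neg_offdiag_def pos_offdiag_def)
  have dg: "\<And>i. (diag_part L + neg_offdiag L) $ i $ i = L $ i $ i"
    by (simp add: diag_part_def neg_offdiag_def)
  show ?thesis
  proof (cases r)
    case (Inl i)
    have "(\<Sum>c\<in>UNIV - {r}. \<bar>S_mat L $ r $ c\<bar>) =
      (\<Sum>k\<in>UNIV. (if k = i then 0 else \<bar>(diag_part L + neg_offdiag L) $ i $ k\<bar>) + \<bar>pos_offdiag L $ i $ k\<bar>)"
      by (simp add: sum_minus_single sum_UNIV_plus Inl S_mat_def block_mat_def sum.distrib cong: if_cong)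
    also have "\<dots> = (\<Sum>j\<in>UNIV - {i}. \<bar>L $ i $ j\<bar>)"
      by (simp add: e sum_minus_single)
    finally have X: "(\<Sum>c\<in>UNIV - {r}. \<bar>S_mat L $ r $ c\<bar>) = (\<Sum>j\<in>UNIV - {i}. \<bar>L $ i $ j\<bar>)" .
    have Sr: "S_mat L $ r $ r = L $ i $ i" by (simp add: Inl S_mat_def block_mat_def diag_part_def neg_offdiag_def)
    show ?thesis unfolding X Sr using sdd[of i] by linarith
  next
    case (Inr i)
    have "(\<Sum>c\<in>UNIV - {r}. \<bar>S_mat L $ r $ c\<bar>) =
      (\<Sum>k\<in>UNIV. \<bar>pos_offdiag L $ i $ k\<bar> + (if k = i then 0 else \<bar>(diag_part L + neg_offdiag L) $ i $ k\<bar>))"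
      by (simp add: sum_minus_single sum_UNIV_plus Inr S_mat_def block_mat_def sum.distrib cong: if_cong)
    also have "\<dots> = (\<Sum>j\<in>UNIV - {i}. \<bar>L $ i $ j\<bar>)"
      by (simp add: e2 sum_minus_single)
    finally have X: "(\<Sum>c\<in>UNIV - {r}. \<bar>S_mat L $ r $ c\<bar>) = (\<Sum>j\<in>UNIV - {i}. \<bar>L $ i $ j\<bar>)" .
    have Sr: "S_mat L $ r $ r = L $ i $ i" by (simp add: Inr S_mat_def block_mat_def diag_part_def neg_offdiag_def)
    show ?thesis unfolding X Sr using sdd[of i] by linarith
  qed
qed
lemma delta_prod: "(\<Sum>j\<in>(UNIV::'n::finite set). (if a = j then (1::real) else 0) * (if b = j then 1 else 0)) = (if a = b then 1 else 0)"
proof -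
  have "\<And>j. (if a = j then (1::real) else 0) * (if b = j then 1 else 0) = (if a = j then (if b = j then 1 else 0) else 0)" by simp
  then show ?thesis by (simp add: sum.delta)
qed

lemma PQ_lemma: "(I_minus_I::real^('n + 'n)^'n) ** transpose I_minus_I = 2 *\<^sub>R mat 1"
  unfolding vec_eq_iff matrix_matrix_mult_def
  apply (simp only: vec_lambda_beta sum_UNIV_plus transpose_def I_minus_I_def sum.case mat_def)
  apply (simp add: delta_prod)
  done

lemma d1: "(\<Sum>k\<in>(UNIV::'n::finite set). (a k::real) * (if j = k then 1 else 0)) = a j"
  by (simp add: if_distrib cong: if_cong)
lemma d2: "(\<Sum>k\<in>(UNIV::'n::finite set). (a k::real) * (- (if j = k then 1 else 0))) = - a j"
  by (simp add: if_distrib cong: if_cong)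
lemma d3: "(\<Sum>k\<in>(UNIV::'n::finite set). (if k = i then 1 else 0) * (a k::real)) = a i"
  by (simp add: if_distrib if_distribR cong: if_cong)
lemma d4: "(\<Sum>k\<in>(UNIV::'n::finite set). (- (if k = i then 1 else 0)) * (a k::real)) = - a i"
  by (simp add: if_distrib if_distribR cong: if_cong)

lemma SQ_lemma: fixes L :: "real^'n^'n"
  shows "S_mat L ** transpose I_minus_I = transpose I_minus_I ** L"
  unfolding vec_eq_iff matrix_matrix_mult_def
proof (intro allI)
  fix r :: "'n+'n" and j :: 'n
  show "(\<chi> i j. \<Sum>k\<in>UNIV. S_mat L $ i $ k * transpose I_minus_I $ k $ j) $ r $ j =
         (\<chi> i j. \<Sum>k\<in>UNIV. transpose I_minus_I $ i $ k * L $ k $ j) $ r $ j"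
    apply (cases r)
    apply (simp_all only: vec_lambda_beta sum_UNIV_plus transpose_def I_minus_I_def sum.case mat_def S_mat_def block_mat_def case_prod_conv d1 d2 d3 d4)
    apply (auto simp: diag_part_def neg_offdiag_def pos_offdiag_def)
    done
qed

lemma rowdd_invertible:
  fixes M :: "real^'m^'m"
  assumes dd: "\<And>i. \<bar>M $ i $ i\<bar> > (\<Sum>j\<in>UNIV - {i}. \<bar>M $ i $ j\<bar>)"
  shows "invertible M"
proof -
  have "\<forall>x. M *v x = 0 \<longrightarrow> x = 0"
  proof (intro allI impI, rule ccontr)
    fix x :: "real^'m" assume Mx: "M *v x = 0" and nz: "x \<noteq> 0"
    obtain i where imax: "\<forall>j. \<bar>x $ j\<bar> \<le> \<bar>x $ i\<bar>"
    proof -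
      have "\<exists>i. \<forall>j. \<bar>x $ j\<bar> \<le> \<bar>x $ i\<bar>"
      proof -
        have "Max (range (\<lambda>j. \<bar>x $ j\<bar>)) \<in> range (\<lambda>j. \<bar>x $ j\<bar>)"
          by (rule Max_in) auto
        then obtain i where "Max (range (\<lambda>j. \<bar>x $ j\<bar>)) = \<bar>x $ i\<bar>" by (metis (no_types, lifting) imageE)
        moreover have "\<forall>j. \<bar>x $ j\<bar> \<le> Max (range (\<lambda>j. \<bar>x $ j\<bar>))"
          by (auto intro: Max_ge)
        ultimately show ?thesis by metis
      qed
      then show ?thesis using that by blast
    qed
    have xi: "\<bar>x $ i\<bar> > 0"
    proof (rule ccontr)
      assume "\<not> \<bar>x $ i\<bar> > 0"
      then have "\<forall>j. x $ j = 0" using imax by (metis abs_le_zero_iff abs_ge_zero order.trans not_less)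
      then show False using nz by (simp add: vec_eq_iff)
    qed
    have "(\<Sum>j\<in>UNIV. M $ i $ j * x $ j) = 0"
      using Mx by (simp add: vec_eq_iff matrix_vector_mult_def)
    also have "(\<Sum>j\<in>UNIV. M $ i $ j * x $ j) = M $ i $ i * x $ i + (\<Sum>j\<in>UNIV - {i}. M $ i $ j * x $ j)"
      by (simp add: sum.remove[of UNIV i])
    finally have eq: "M $ i $ i * x $ i = - (\<Sum>j\<in>UNIV - {i}. M $ i $ j * x $ j)" by linarith
    have "\<bar>M $ i $ i\<bar> * \<bar>x $ i\<bar> = \<bar>\<Sum>j\<in>UNIV - {i}. M $ i $ j * x $ j\<bar>"
      using eq by (metis abs_minus_cancel abs_mult)
    also have "\<dots> \<le> (\<Sum>j\<in>UNIV - {i}. \<bar>M $ i $ j\<bar> * \<bar>x $ j\<bar>)"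
      by (metis (no_types, lifting) sum_abs abs_mult sum.cong)
    also have "\<dots> \<le> (\<Sum>j\<in>UNIV - {i}. \<bar>M $ i $ j\<bar> * \<bar>x $ i\<bar>)"
      by (rule sum_mono) (simp add: imax mult_left_mono)
    also have "\<dots> = (\<Sum>j\<in>UNIV - {i}. \<bar>M $ i $ j\<bar>) * \<bar>x $ i\<bar>"
      by (simp add: sum_distrib_right)
    also have "\<dots> < \<bar>M $ i $ i\<bar> * \<bar>x $ i\<bar>"
      using dd[of i] xi by simp
    finally show False by simp
  qed
  then show ?thesis
    using matrix_left_invertible_ker invertible_left_inverse by blast
qed

lemma matrix_inv_props:
  fixes A :: "real^'m^'m"
  assumes "invertible A"
  shows "matrix_inv A ** A = mat 1" "A ** matrix_inv A = mat 1"
proof -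
  have "A ** matrix_inv A = mat 1 \<and> matrix_inv A ** A = mat 1"
    using assms unfolding invertible_def matrix_inv_def by (rule someI_ex)
  then show "matrix_inv A ** A = mat 1" "A ** matrix_inv A = mat 1" by auto
qed

theorem mainTheorem12:
  fixes L :: "real^'n^'n" and Ct :: "real^'k^('n + 'n)"
  assumes "SDD L"
    and "Ct ** transpose Ct = matrix_inv (S_mat L)"
  shows "((1 / sqrt 2) *\<^sub>R (I_minus_I ** Ct)) ** transpose ((1 / sqrt 2) *\<^sub>R (I_minus_I ** Ct))
         = matrix_inv L"
proof -
  define P :: "real^('n + 'n)^'n" where "P = I_minus_I"
  define Q where "Q = transpose P"
  define S where "S = S_mat L"
  have sdd: "\<And>i. L $ i $ i > (\<Sum>j\<in>UNIV - {i}. \<bar>L $ i $ j\<bar>)"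
    using assms(1) unfolding SDD_def by blast
  have invL: "invertible L"
    by (rule rowdd_invertible) (metis sdd abs_ge_self order_less_le_trans)
  have invS: "invertible S"
  proof (rule rowdd_invertible)
    fix r :: "'n + 'n"
    show "\<bar>S $ r $ r\<bar> > (\<Sum>c\<in>UNIV - {r}. \<bar>S $ r $ c\<bar>)"
      unfolding S_def by (rule S_dd[OF sdd])
  qed
  have SQ: "S ** Q = Q ** L"
    unfolding S_def Q_def P_def by (rule SQ_lemma)
  have PQ: "P ** Q = 2 *\<^sub>R mat 1"
    unfolding Q_def P_def by (rule PQ_lemma)
  define Si where "Si = matrix_inv S"
  define Li where "Li = matrix_inv L"
  have "Si ** Q = Si ** Q ** (L ** Li)"
    using matrix_inv_props(2)[OF invL] by (simp add: Li_def)
  also have "\<dots> = Si ** (Q ** L) ** Li"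
    by (simp add: matrix_mul_assoc)
  also have "\<dots> = (Si ** S) ** Q ** Li"
    by (simp add: SQ[symmetric] matrix_mul_assoc)
  also have "\<dots> = Q ** Li"
    using matrix_inv_props(1)[OF invS] by (simp add: Si_def)
  finally have SiQ: "Si ** Q = Q ** Li" .
  have "((1 / sqrt 2) *\<^sub>R (P ** Ct)) ** transpose ((1 / sqrt 2) *\<^sub>R (P ** Ct))
      = ((1 / sqrt 2) * (1 / sqrt 2)) *\<^sub>R (P ** (Ct ** transpose Ct) ** Q)"
    by (simp add: transpose_scalar matrix_scalar_ac scalar_matrix_assoc[symmetric]
        matrix_transpose_mul matrix_mul_assoc Q_def)
  also have "\<dots> = (1/2) *\<^sub>R (P ** (Si ** Q))"
    using assms(2) by (simp add: Si_def S_def matrix_mul_assoc)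
  also have "\<dots> = (1/2) *\<^sub>R ((P ** Q) ** Li)"
    by (simp add: SiQ matrix_mul_assoc)
  also have "\<dots> = Li"
    by (simp add: PQ scalar_matrix_assoc[symmetric])
  finally show ?thesis by (simp add: P_def Li_def)
qed

end
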